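(* Let $U\subset\mathbb{C}\setminus\{0\}$ be a connected domain and let $f_1,f_2$ be complex-differentiable and nowhere vanishing on $U$ such that $\mathcal{A}[f_1]=f_2$ and $\mathcal{A}[f_2]=f_1$ on $U$. Then $f_2-f_1$ is constant on $U$.
   Context: For a complex-differentiable, nowhere-vanishing function $f$ on a domain $U\subset\mathbb{C}\setminus\{0\}$, the dual logarithmic derivative operator is $\mathcal{A}[f](x)=\dfrac{x f'(x)}{f(x)}$ (equivalently $\mathrm{d}\ln f/\mathrm{d}\ln x$ for fixed analytic branches of the logarithms). *)

theory Defs
  imports "HOL-Complex_Analysis.Complex_Analysis"
begin

definition dual_logderiv :: "(complex \<Rightarrow> complex) \<Rightarrow> complex \<Rightarrow> complex" where
  "dual_logderiv f x = x * deriv f x / f x"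

end

theory Submission
  imports Defs
begin

theorem lemma4p1:
  fixes U :: "complex set" and f1 f2 :: "complex \<Rightarrow> complex"
  assumes "open U" and "connected U" and "0 \<notin> U"
    and "f1 holomorphic_on U" and "f2 holomorphic_on U"
    and "\<And>x. x \<in> U \<Longrightarrow> f1 x \<noteq> 0"
    and "\<And>x. x \<in> U \<Longrightarrow> f2 x \<noteq> 0"
    and "\<And>x. x \<in> U \<Longrightarrow> dual_logderiv f1 x = f2 x"
    and "\<And>x. x \<in> U \<Longrightarrow> dual_logderiv f2 x = f1 x"
  shows "\<exists>c. \<forall>x\<in>U. f2 x - f1 x = c"
proof -
  have D: "DERIV (\<lambda>x. f2 x - f1 x) x :> 0" if x: "x \<in> U" for x
  proof -
    have x0: "x \<noteq> 0" using x assms(3) by auto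
    have d1: "DERIV f1 x :> deriv f1 x" and d2: "DERIV f2 x :> deriv f2 x"
      using assms(1,4,5) x holomorphic_derivI by blast+
    have e1: "x * deriv f1 x = f2 x * f1 x"
      using assms(8)[OF x] assms(6)[OF x] by (simp add: dual_logderiv_def field_simps)
    have e2: "x * deriv f2 x = f1 x * f2 x"
      using assms(9)[OF x] assms(7)[OF x] by (simp add: dual_logderiv_def field_simps)
    have "deriv f2 x = deriv f1 x" using e1 e2 x0
      by (metis mult.commute mult_left_cancel)
    then show ?thesis using DERIV_diff[OF d2 d1] by simp
  qed
  have c: "continuous_on U (\<lambda>x. f2 x - f1 x)"
    using assms(4,5) by (intro continuous_intros holomorphic_on_imp_continuous_on)
  obtain c where "\<And>x. x \<in> U \<Longrightarrow> f2 x - f1 x = c"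
    using DERIV_zero_connected_constant[OF assms(2,1) finite.emptyI c] D by blast
  then show ?thesis by blast
qed

end
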